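(* Consider either the fixed $p$-processor cup game (for some $p$) or the variable-processor cup game, in either the negative-fill or the non-negative-fill version. If a state $A$ weakly monopolizes a state $B$, then for every $t\ge0$, $\operatorname{GREEDY}(A,t)\ge\operatorname{OPT}(B,t)$.
   Context: A state is a multiset of $n$ real fills. In the variable-processor game, each round the filler chooses an integer $1\le p\le n$ and reals $a_i\in[0,1]$ with $\sum a_i=p$, adds $a_i$ to cup $i$, and then the emptier chooses $p$ distinct cups and removes one unit from each (fill $x\mapsto\max(0,x-1)$ in the non-negative-fill version, $x\mapsto x-1$ in the negative-fill version); the fixed $p$-processor game is the same with $p$ fixed. Backlog = maximum fill. $\operatorname{OPT}(S,0)$ is the backlog of $S$ and $\operatorname{OPT}(S,t)=\sup_{S'}\min_{S''}\operatorname{OPT}(S'',t-1)$ with $S'$ over states reachable from $S$ by a filler move and $S''$ over states reachable from $S'$ by an emptier move. $\operatorname{GREEDY}(S,t)$ is the supremum backlog a filler can achieve after $t$ rounds from $S$ when the emptier always empties the $p$ fullest cups. $A$ monopolizes $B$ if the cups can be labeled $1,\dots,n$ in both states so that cups $3,\dots,n$ have equal fills in $A$ and $B$, cup $1$ in $A$ has more water than cup $2$ in $B$, cup $1$ in $A$ has exactly one more unit than cup $1$ in $B$, and cup $2$ in $B$ has exactly $c$ more units than cup $2$ in $A$ for some $0\le c\le1$. $A$ dominates $B$ if the cups can be labeled so that each cup in $A$ has at least as much water as the same-labeled cup in $B$. $A$ weakly monopolizes $B$ if $A$ monopolizes or dominates $B$. *)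

theory Defs
  imports Complex_Main "HOL-Library.Multiset"
begin

text \<open>Game parameters:
  P  : the set of processor counts the filler may choose from
       (fixed p-processor game: P = {p}; variable-processor game: P = {1..n});
  nn : True for the non-negative-fill version, False for the negative-fill version.\<close>

definition dec :: "bool \<Rightarrow> real \<Rightarrow> real" where
  "dec nn x = (if nn then max 0 (x - 1) else x - 1)"

definition backlog :: "real multiset \<Rightarrow> real" where
  "backlog S = Max (set_mset S)"

definition filler_moves :: "nat set \<Rightarrow> real multiset \<Rightarrow> (nat \<times> real multiset) set" where
  "filler_moves P S = {(p, S'). p \<in> P \<and>
     (\<exists>xs a. mset xs = S \<and> length a = length xs \<and>
        (\<forall>i<length a. 0 \<le> a ! i \<and> a ! i \<le> 1) \<and> sum_list a = real p \<and>
        S' = mset (map2 (+) xs a))}"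

definition emptier_moves :: "bool \<Rightarrow> nat \<Rightarrow> real multiset \<Rightarrow> real multiset set" where
  "emptier_moves nn p S = {S''. \<exists>ys J. mset ys = S \<and> J \<subseteq> {..<length ys} \<and> card J = p \<and>
     S'' = mset (map (\<lambda>i. if i \<in> J then dec nn (ys ! i) else ys ! i) [0..<length ys])}"

definition greedy_empty :: "bool \<Rightarrow> nat \<Rightarrow> real multiset \<Rightarrow> real multiset" where
  "greedy_empty nn p S = (let xs = rev (sorted_list_of_multiset S) in
     mset (map (dec nn) (take p xs) @ drop p xs))"

primrec OPT :: "nat set \<Rightarrow> bool \<Rightarrow> real multiset \<Rightarrow> nat \<Rightarrow> real" where
  "OPT P nn S 0 = backlog S"
| "OPT P nn S (Suc t) =
     (SUP m \<in> filler_moves P S. INF S'' \<in> emptier_moves nn (fst m) (snd m). OPT P nn S'' t)"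

primrec GREEDY :: "nat set \<Rightarrow> bool \<Rightarrow> real multiset \<Rightarrow> nat \<Rightarrow> real" where
  "GREEDY P nn S 0 = backlog S"
| "GREEDY P nn S (Suc t) =
     (SUP m \<in> filler_moves P S. GREEDY P nn (greedy_empty nn (fst m) (snd m)) t)"

text \<open>Labelings: lists xs, ys enumerating A and B; index 0 = cup 1, index 1 = cup 2.\<close>
definition monopolizes :: "real multiset \<Rightarrow> real multiset \<Rightarrow> bool" where
  "monopolizes A B = (\<exists>xs ys. mset xs = A \<and> mset ys = B \<and> length xs = length ys \<and>
     2 \<le> length xs \<and>
     (\<forall>i. 2 \<le> i \<and> i < length xs \<longrightarrow> xs ! i = ys ! i) \<and>
     xs ! 0 > ys ! 1 \<and>
     xs ! 0 = ys ! 0 + 1 \<and>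
     (\<exists>c. 0 \<le> c \<and> c \<le> 1 \<and> ys ! 1 = xs ! 1 + c))"

definition dominates :: "real multiset \<Rightarrow> real multiset \<Rightarrow> bool" where
  "dominates A B = (\<exists>xs ys. mset xs = A \<and> mset ys = B \<and> length xs = length ys \<and>
     (\<forall>i<length xs. ys ! i \<le> xs ! i))"

definition weakly_monopolizes :: "real multiset \<Rightarrow> real multiset \<Rightarrow> bool" where
  "weakly_monopolizes A B = (monopolizes A B \<or> dominates A B)"

end

theory Submission
  imports Defs
begin

lemma reenum: "mset (map fst zs0) = mset ys \<Longrightarrow> \<exists>zs. mset zs = mset zs0 \<and> map fst zs = ys"
proof (induction ys arbitrary: zs0)
  case Nil then show ?case by simp
next
  case (Cons y ys)
  have "y \<in> set (map fst zs0)" using Cons.prems by (metis list.set_intros(1) set_mset_mset)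
  then obtain z where z: "z \<in> set zs0" "fst z = y" by auto
  have "mset (map fst (remove1 z zs0)) = mset ys"
    using Cons.prems z by (simp add: mset_map mset_remove1 image_mset_Diff)
  then obtain zs where "mset zs = mset (remove1 z zs0)" "map fst zs = ys" using Cons.IH by blast
  then show ?case using z by (intro exI[of _ "z # zs"]) (simp add: mset_remove1)
qed

lemma filler_reenum:
  assumes "(p,S') \<in> filler_moves P S" "mset xs = S"
  shows "p \<in> P \<and> (\<exists>a. length a = length xs \<and> (\<forall>x\<in>set a. 0 \<le> x \<and> x \<le> 1) \<and> sum_list a = real p \<and> S' = mset (map2 (+) xs a))"
proof -
  obtain xs0 a0 where h: "p \<in> P" "mset xs0 = S" "length a0 = length xs0"
     "\<forall>i<length a0. 0 \<le> a0 ! i \<and> a0 ! i \<le> 1" "sum_list a0 = real p" "S' = mset (map2 (+) xs0 a0)"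
    using assms(1) unfolding filler_moves_def by auto
  have "mset (map fst (zip xs0 a0)) = mset xs" using h assms(2) by simp
  then obtain zs where zs: "mset zs = mset (zip xs0 a0)" "map fst zs = xs" using reenum by blast
  define a where "a = map snd zs"
  have z: "zip xs a = zs" using zs(2) a_def zip_map_fst_snd by blast
  have "S' = mset (map (\<lambda>(x,y). x + y) zs)"
    using h(6) zs(1) by (metis mset_map)
  moreover have "sum_list a = real p"
  proof -
    have "sum_list a = sum_mset (image_mset snd (mset zs))" unfolding a_def
      by (metis mset_map sum_mset_sum_list)
    also have "\<dots> = sum_list (map snd (zip xs0 a0))" using zs(1) by (metis mset_map sum_mset_sum_list)
    finally show ?thesis using h by simp
  qed
  moreover have "\<forall>x\<in>set a. 0 \<le> x \<and> x \<le> 1"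
  proof -
    have "set a = snd ` set zs" unfolding a_def by simp
    also have "\<dots> = snd ` set (zip xs0 a0)" using zs(1) by (metis set_mset_mset)
    also have "\<dots> = set a0" using h(3) by (metis map_snd_zip set_map)
    finally show ?thesis using h(4) by (metis in_set_conv_nth)
  qed
  moreover have "length a = length xs" using zs(2) a_def by (metis length_map)
  moreover have "S' = mset (map2 (+) xs a)" using z \<open>S' = mset (map (\<lambda>(x,y). x + y) zs)\<close> by simp
  ultimately show ?thesis using h(1) by (intro conjI exI[of _ a]) auto
qed

lemma filler_intro:
  assumes "p \<in> P" "length a = length xs" "\<forall>x\<in>set a. 0 \<le> x \<and> x \<le> 1" "sum_list a = real p"
  shows "(p, mset (map2 (+) xs a)) \<in> filler_moves P (mset xs)"
proof -
  have "\<forall>i<length a. 0 \<le> a ! i \<and> a ! i \<le> 1" using assms(3) by (simp add: all_set_conv_all_nth)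
  then show ?thesis using assms unfolding filler_moves_def
    apply (simp only: mem_Collect_eq prod.case)
    apply (rule conjI, simp)
    apply (rule exI[of _ xs], rule exI[of _ a])
    by auto
qed

definition F :: "bool \<Rightarrow> real \<Rightarrow> bool \<Rightarrow> real" where
  "F nn x b = (if b then dec nn x else x)"

lemma emptier_intro:
  assumes "mset ys = S" "length g = length ys" "length (filter id g) = p"
  shows "mset (map2 (F nn) ys g) \<in> emptier_moves nn p S"
proof -
  define J where "J = {i. i < length ys \<and> g ! i}"
  have "card J = p" using assms(2,3) unfolding J_def by (simp add: length_filter_conv_card)
  moreover have "map2 (F nn) ys g = map (\<lambda>i. if i \<in> J then dec nn (ys ! i) else ys ! i) [0..<length ys]"
    using assms(2) by (intro nth_equalityI) (auto simp: J_def F_def)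
  moreover have "J \<subseteq> {..<length ys}" unfolding J_def by auto
  ultimately show ?thesis unfolding emptier_moves_def using assms(1)
    apply (simp only: mem_Collect_eq)
    apply (intro conjI exI[of _ ys] exI[of _ J])
    by auto
qed

lemma len_filter_mset: "length (filter P xs) = size (filter_mset P (mset xs))"
  by (metis mset_filter size_mset)

lemma greedy_char:
  assumes "p \<le> size X" "mset xs = X"
  shows "\<exists>g. length g = length xs \<and> length (filter id g) = p \<and>
     (\<forall>i<length xs. \<forall>j<length xs. g ! i \<and> \<not> g ! j \<longrightarrow> xs ! j \<le> xs ! i) \<and>
     greedy_empty nn p X = mset (map2 (F nn) xs g)"
proof -
  define zs where "zs = rev (sorted_list_of_multiset X)"
  define n where "n = length zs"
  have mz: "mset zs = X" unfolding zs_def by simp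
  have nX: "n = size X" unfolding n_def using mz by (metis size_mset)
  define g0 where "g0 = replicate p True @ replicate (n - p) False"
  have lg0: "length g0 = n" using assms(1) nX unfolding g0_def by simp
  have sorted: "\<And>i j. i \<le> j \<Longrightarrow> j < n \<Longrightarrow> zs ! j \<le> zs ! i"
  proof -
    fix i j assume ij: "i \<le> j" "j < n"
    let ?s = "sorted_list_of_multiset X"
    have ls: "length ?s = n" unfolding n_def zs_def by simp
    have "zs ! j = ?s ! (n - Suc j)" "zs ! i = ?s ! (n - Suc i)"
      using ij ls unfolding zs_def by (auto simp: rev_nth)
    moreover have "?s ! (n - Suc j) \<le> ?s ! (n - Suc i)"
      using ij ls by (intro sorted_nth_mono) auto
    ultimately show "zs ! j \<le> zs ! i" by simp
  qed
  have ge: "greedy_empty nn p X = mset (map2 (F nn) zs g0)"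
  proof -
    have "map (dec nn) (take p zs) @ drop p zs = map2 (F nn) zs g0"
      using assms(1) nX lg0 unfolding g0_def n_def
      by (intro nth_equalityI) (auto simp: nth_append F_def min_def)
    then show ?thesis unfolding greedy_empty_def zs_def Let_def by simp
  qed
  have "mset (map fst (zip zs g0)) = mset xs" using lg0 mz assms(2) n_def by simp
  then obtain ws where ws: "mset ws = mset (zip zs g0)" "map fst ws = xs" using reenum by blast
  define g where "g = map snd ws"
  have wz: "zip xs g = ws" using ws(2) g_def zip_map_fst_snd by blast
  have lg: "length g = length xs" using ws(2) g_def by auto
  have "length (filter id g) = length (filter snd ws)" unfolding g_def
    by (simp add: filter_map o_def)
  also have "\<dots> = size (filter_mset snd (mset ws))" by (rule len_filter_mset)
  also have "\<dots> = length (filter snd (zip zs g0))" using ws(1) by (metis len_filter_mset)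
  also have "\<dots> = length (filter id g0)"
  proof -
    have "map snd (zip zs g0) = g0" using lg0 n_def by simp
    moreover have "length (filter id (map snd (zip zs g0))) = length (filter snd (zip zs g0))"
      by (simp add: filter_map o_def)
    ultimately show ?thesis by simp
  qed
  also have "\<dots> = p" unfolding g0_def by simp
  finally have cnt: "length (filter id g) = p" .
  have prp: "\<forall>i<length xs. \<forall>j<length xs. g ! i \<and> \<not> g ! j \<longrightarrow> xs ! j \<le> xs ! i"
  proof (intro allI impI)
    fix i j assume ij: "i < length xs" "j < length xs" "g ! i \<and> \<not> g ! j"
    have g0n: "\<forall>k<n. g0 ! k = (k < p)" unfolding g0_def using assms(1) nX by (auto simp: nth_append)
    have sw: "set ws = set (zip zs g0)" using ws(1) by (metis set_mset_mset)
    have wi: "ws ! i = (xs ! i, True)" "ws ! j = (xs ! j, False)" using ij lg by (simp_all add: wz[symmetric])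
    have lw: "length ws = length xs" using ws(2) by (metis length_map)
    have "(xs ! i, True) \<in> set (zip zs g0)" "(xs ! j, False) \<in> set (zip zs g0)"
      using wi ij lw sw by (metis nth_mem)+
    then obtain i' j' where A: "i' < length (zip zs g0)" "zip zs g0 ! i' = (xs ! i, True)"
        "j' < length (zip zs g0)" "zip zs g0 ! j' = (xs ! j, False)"
      by (metis in_set_conv_nth)
    then have B: "i' < n" "j' < n" "zs ! i' = xs ! i" "g0 ! i'" "zs ! j' = xs ! j" "\<not> g0 ! j'"
      using lg0 n_def by auto
    then have "i' < p" "p \<le> j'" using g0n by auto
    then show "xs ! j \<le> xs ! i" using sorted[of i' j'] B by simp
  qed
  have "greedy_empty nn p X = mset (map (\<lambda>(x,b). F nn x b) (zip zs g0))" using ge by simp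
  also have "\<dots> = mset (map (\<lambda>(x,b). F nn x b) ws)" using ws(1) by (metis mset_map)
  also have "\<dots> = mset (map2 (F nn) xs g)" using wz by simp
  finally show ?thesis using lg cnt prp by blast
qed

lemma mono_elim:
  assumes "monopolizes A B"
  shows "\<exists>u v c R. A = mset ((u+1)#v#R) \<and> B = mset (u#(v+c)#R) \<and> 0 \<le> c \<and> c \<le> 1 \<and> v + c < u + 1"
proof -
  obtain xs ys c where h: "mset xs = A" "mset ys = B" "length xs = length ys" "2 \<le> length xs"
     "\<forall>i. 2 \<le> i \<and> i < length xs \<longrightarrow> xs ! i = ys ! i" "xs ! 0 > ys ! 1" "xs ! 0 = ys ! 0 + 1"
     "0 \<le> c" "c \<le> 1" "ys ! 1 = xs ! 1 + c"
    using assms unfolding monopolizes_def by blast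
  obtain x0 x1 R where xs: "xs = x0 # x1 # R" using h(4)
    by (metis One_nat_def Suc_1 Suc_le_length_iff)
  obtain y0 y1 R' where ys: "ys = y0 # y1 # R'" using h(3,4)
    by (metis One_nat_def Suc_1 Suc_le_length_iff)
  have "R = R'"
  proof (rule nth_equalityI)
    show "length R = length R'" using h(3) xs ys by simp
    fix k assume "k < length R"
    then show "R ! k = R' ! k" using h(5)[rule_format, of "Suc (Suc k)"] xs ys by simp
  qed
  then show ?thesis using h xs ys
    by (intro exI[of _ y0] exI[of _ x1] exI[of _ c] exI[of _ R]) auto
qed

lemma mono_intro:
  assumes "0 \<le> c" "c \<le> 1" "v + c < u + 1"
  shows "monopolizes (mset ((u+1)#v#R)) (mset (u#(v+c)#R))"
proof -
  have "\<forall>i. 2 \<le> i \<and> i < length ((u+1)#v#R) \<longrightarrow> ((u+1)#v#R) ! i = (u#(v+c)#R) ! i"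
  proof (intro allI impI)
    fix i :: nat assume "2 \<le> i \<and> i < length ((u+1)#v#R)"
    then obtain k where "i = Suc (Suc k)" by (metis add_2_eq_Suc le_Suc_ex)
    then show "((u+1)#v#R) ! i = (u#(v+c)#R) ! i" by simp
  qed
  note H = this
  show ?thesis unfolding monopolizes_def
    apply (rule exI[of _ "(u+1)#v#R"], rule exI[of _ "u#(v+c)#R"])
    using assms H by (auto intro!: exI[of _ c])
qed

lemma dom_cons2:
  assumes "a' \<le> a" "b' \<le> b"
  shows "dominates (mset (a#b#R)) (mset (a'#b'#R))"
proof -
  have "\<forall>i<length (a#b#R). (a'#b'#R) ! i \<le> (a#b#R) ! i"
  proof (intro allI impI)
    fix i assume "i < length (a#b#R)"
    show "(a'#b'#R) ! i \<le> (a#b#R) ! i"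
      using assms by (cases i; cases "i - 1") auto
  qed
  note H = this
  show ?thesis unfolding dominates_def
    apply (rule exI[of _ "a#b#R"], rule exI[of _ "a'#b'#R"]) using H by auto
qed

lemma sum_list_le_len: "\<forall>x\<in>set a. x \<le> 1 \<Longrightarrow> sum_list a \<le> real (length a)"
  by (induction a) auto

lemma filler_size: "(p,S') \<in> filler_moves P S \<Longrightarrow> size S' = size S \<and> p \<le> size S"
proof -
  assume h: "(p,S') \<in> filler_moves P S"
  obtain xs where xs: "mset xs = S" using ex_mset by blast
  obtain a where a: "length a = length xs" "\<forall>x\<in>set a. 0 \<le> x \<and> x \<le> 1" "sum_list a = real p"
     "S' = mset (map2 (+) xs a)" using filler_reenum[OF h xs] by blast
  have "real p \<le> real (length a)" using a(2,3) sum_list_le_len by metis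
  then show ?thesis using a xs by auto
qed

lemma emptier_size: "S'' \<in> emptier_moves nn p S \<Longrightarrow> size S'' = size S"
  unfolding emptier_moves_def by auto

lemma greedy_size: "size (greedy_empty nn p S) = size S"
proof -
  have "length (sorted_list_of_multiset S) = size S" by (metis mset_sorted_list_of_multiset size_mset)
  then show ?thesis unfolding greedy_empty_def Let_def by simp
qed

definition nng :: "real multiset \<Rightarrow> bool" where "nng S = (\<forall>x\<in>#S. 0 \<le> x)"

lemma dec_nn: "nn \<Longrightarrow> 0 \<le> dec nn x" unfolding dec_def by simp
lemma dec_mono: "x \<le> y \<Longrightarrow> dec nn x \<le> dec nn y" unfolding dec_def by auto
lemma dec_bounds: "x - 1 \<le> dec nn x" "dec nn x \<le> max x 0" unfolding dec_def by auto

lemma filler_nng: "(p,S') \<in> filler_moves P S \<Longrightarrow> nng S \<Longrightarrow> nng S'"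
proof -
  assume h: "(p,S') \<in> filler_moves P S" "nng S"
  obtain xs where xs: "mset xs = S" using ex_mset by blast
  obtain a where a: "length a = length xs" "\<forall>x\<in>set a. 0 \<le> x \<and> x \<le> 1"
     "S' = mset (map2 (+) xs a)" using filler_reenum[OF h(1) xs] by blast
  show ?thesis unfolding nng_def a(3)
  proof
    fix y assume "y \<in># mset (map2 (+) xs a)"
    then obtain i where i: "i < length xs" "y = xs ! i + a ! i" using a(1)
      by (auto simp: in_set_conv_nth)
    have "0 \<le> xs ! i" using h(2) xs i(1) unfolding nng_def by auto
    moreover have "0 \<le> a ! i" using a(1,2) i(1) by auto
    ultimately show "0 \<le> y" using i by simp
  qed
qed

lemma emptier_nng: "S'' \<in> emptier_moves nn p S \<Longrightarrow> nn \<Longrightarrow> nng S \<Longrightarrow> nng S''"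
  unfolding emptier_moves_def nng_def using dec_nn by auto

lemma greedy_nng: "nn \<Longrightarrow> nng S \<Longrightarrow> nng (greedy_empty nn p S)"
  unfolding greedy_empty_def Let_def nng_def using dec_nn
  by (auto dest: in_set_takeD in_set_dropD)

lemma F_simps: "F nn x True = dec nn x" "F nn x False = x" unfolding F_def by simp_all

lemma emptier_step:
  assumes wm: "weakly_monopolizes X Y" and p: "p \<le> size X" and nnh: "nn \<longrightarrow> nng X \<and> nng Y"
  shows "\<exists>Y''\<in>emptier_moves nn p Y. weakly_monopolizes (greedy_empty nn p X) Y''"
proof (cases "dominates X Y")
  case True
  then obtain xs ys where h: "mset xs = X" "mset ys = Y" "length xs = length ys"
     "\<forall>i<length xs. ys ! i \<le> xs ! i" unfolding dominates_def by blast
  obtain g where g: "length g = length xs" "length (filter id g) = p"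
     "greedy_empty nn p X = mset (map2 (F nn) xs g)"
    using greedy_char[OF p h(1), of nn] by blast
  have mem: "mset (map2 (F nn) ys g) \<in> emptier_moves nn p Y"
    using emptier_intro[OF h(2), of g p nn] g h(3) by simp
  have pw: "\<forall>i<length (map2 (F nn) xs g). (map2 (F nn) ys g) ! i \<le> (map2 (F nn) xs g) ! i"
    using h g by (auto simp: F_def dec_mono)
  have "dominates (mset (map2 (F nn) xs g)) (mset (map2 (F nn) ys g))"
    unfolding dominates_def
    apply (rule exI[of _ "map2 (F nn) xs g"], rule exI[of _ "map2 (F nn) ys g"])
    using h g pw by simp
  then show ?thesis using mem g(3) unfolding weakly_monopolizes_def by auto
next
  case False
  then have "monopolizes X Y" using wm unfolding weakly_monopolizes_def by blast
  then obtain u v c R where h: "X = mset ((u+1)#v#R)" "Y = mset (u#(v+c)#R)" "0 \<le> c" "c \<le> 1"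
     "v + c < u + 1" using mono_elim by blast
  obtain g where g: "length g = length ((u+1)#v#R)" "length (filter id g) = p"
     "\<forall>i<length ((u+1)#v#R). \<forall>j<length ((u+1)#v#R). g ! i \<and> \<not> g ! j \<longrightarrow> ((u+1)#v#R) ! j \<le> ((u+1)#v#R) ! i"
     "greedy_empty nn p X = mset (map2 (F nn) ((u+1)#v#R) g)"
    using greedy_char[OF p h(1)[symmetric], of nn] by blast
  obtain g0 g1 gR where gg: "g = g0 # g1 # gR" using g(1)
    by (metis Suc_length_conv length_Cons)
  have lgR: "length gR = length R" using g(1) gg by simp
  define RR where "RR = map2 (F nn) R gR"
  have X'': "greedy_empty nn p X = mset (F nn (u+1) g0 # F nn v g1 # RR)"
    using g(4) gg RR_def by simp
  have nonneg: "nn \<Longrightarrow> 0 \<le> u \<and> 0 \<le> v" using nnh h unfolding nng_def by auto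
  have "\<not> (g1 \<and> \<not> g0)"
  proof
    assume "g1 \<and> \<not> g0"
    then have "u + 1 \<le> v" using g(3)[rule_format, of 1 0] gg by simp
    then show False using h(3,5) by simp
  qed
  then consider "g0 \<and> g1" | "g0 \<and> \<not> g1" | "\<not> g0 \<and> \<not> g1" by blast
  then show ?thesis
  proof cases
    case 1
    define Y'' where "Y'' = mset (map2 (F nn) (u#(v+c)#R) g)"
    have mem: "Y'' \<in> emptier_moves nn p Y" unfolding Y''_def
      using emptier_intro[OF h(2)[symmetric], of g p nn] g by simp
    have Y'': "Y'' = mset (dec nn u # dec nn (v+c) # RR)" unfolding Y''_def using gg 1 RR_def by (simp add: F_simps)
    have X2: "greedy_empty nn p X = mset (dec nn (u+1) # dec nn v # RR)" using X'' 1 by (simp add: F_simps)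
    have "weakly_monopolizes (mset (dec nn (u+1) # dec nn v # RR)) (mset (dec nn u # dec nn (v+c) # RR))"
    proof (cases nn)
      case False
      have "monopolizes (mset (((u-1)+1) # (v-1) # RR)) (mset ((u-1) # ((v-1)+c) # RR))"
        using h by (intro mono_intro) auto
      then show ?thesis using False unfolding weakly_monopolizes_def dec_def by (simp add: algebra_simps)
    next
      case True
      note nn0 = nonneg[OF True]
      show ?thesis
      proof (cases "1 \<le> u")
        case True
        have "monopolizes (mset (((u-1)+1) # (max 0 (v-1)) # RR))
            (mset ((u-1) # ((max 0 (v-1)) + (max 0 (v+c-1) - max 0 (v-1))) # RR))"
          using h True by (intro mono_intro) auto
        then show ?thesis using True \<open>nn\<close> nn0 unfolding weakly_monopolizes_def dec_def by simp
      next
        case False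
        have dom: "dominates (mset (u # max 0 (v-1) # RR)) (mset (max 0 (v+c-1) # 0 # RR))"
          using h nn0 by (intro dom_cons2) auto
        have eq: "mset (max 0 (v+c-1) # 0 # RR) = mset (0 # max 0 (v+c-1) # RR)" by (simp add: add_mset_commute)
        have "dominates (mset (u # max 0 (v-1) # RR)) (mset (0 # max 0 (v+c-1) # RR))"
          by (subst eq[symmetric]) (rule dom)
        moreover have "dec nn (u+1) = u" "dec nn u = 0" "dec nn v = max 0 (v-1)" "dec nn (v+c) = max 0 (v+c-1)"
          using False \<open>nn\<close> nn0 unfolding dec_def by auto
        ultimately show ?thesis unfolding weakly_monopolizes_def by simp
      qed
    qed
    then show ?thesis using mem X2 Y'' by auto
  next
    case 2
    define g' where "g' = False # True # gR"
    define Y'' where "Y'' = mset (map2 (F nn) (u#(v+c)#R) g')"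
    have "length (filter id g') = p" using g(2) gg 2 g'_def by simp
    then have mem: "Y'' \<in> emptier_moves nn p Y" unfolding Y''_def
      using emptier_intro[OF h(2)[symmetric], of g' p nn] g gg g'_def by simp
    have Y'': "Y'' = mset (u # dec nn (v+c) # RR)" unfolding Y''_def g'_def RR_def by (simp add: F_simps)
    have X2: "greedy_empty nn p X = mset (dec nn (u+1) # v # RR)" using X'' 2 by (simp add: F_simps)
    have "dominates (mset (dec nn (u+1) # v # RR)) (mset (u # dec nn (v+c) # RR))"
      using h nonneg by (intro dom_cons2) (auto simp: dec_def)
    then show ?thesis using mem X2 Y'' unfolding weakly_monopolizes_def by auto
  next
    case 3
    define Y'' where "Y'' = mset (map2 (F nn) (u#(v+c)#R) g)"
    have mem: "Y'' \<in> emptier_moves nn p Y" unfolding Y''_def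
      using emptier_intro[OF h(2)[symmetric], of g p nn] g by simp
    have Y'': "Y'' = mset (u # (v+c) # RR)" unfolding Y''_def using gg 3 RR_def by (simp add: F_simps)
    have X2: "greedy_empty nn p X = mset ((u+1) # v # RR)" using X'' 3 by (simp add: F_simps)
    have "monopolizes (mset ((u+1) # v # RR)) (mset (u # (v+c) # RR))"
      using h by (intro mono_intro) auto
    then show ?thesis using mem X2 Y'' unfolding weakly_monopolizes_def by auto
  qed
qed

lemma filler_step:
  assumes wm: "weakly_monopolizes A B" and fm: "(p,B') \<in> filler_moves P B"
  shows "\<exists>A'. (p,A') \<in> filler_moves P A \<and> weakly_monopolizes A' B'"
proof (cases "dominates A B")
  case True
  then obtain xs ys where h: "mset xs = A" "mset ys = B" "length xs = length ys"
     "\<forall>i<length xs. ys ! i \<le> xs ! i" unfolding dominates_def by blast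
  obtain a where a: "p \<in> P" "length a = length ys" "\<forall>x\<in>set a. 0 \<le> x \<and> x \<le> 1" "sum_list a = real p"
     "B' = mset (map2 (+) ys a)" using filler_reenum[OF fm h(2)] by blast
  have mem: "(p, mset (map2 (+) xs a)) \<in> filler_moves P A"
    using filler_intro[of p P a xs] a h by simp
  have pw: "\<forall>i<length (map2 (+) xs a). (map2 (+) ys a) ! i \<le> (map2 (+) xs a) ! i"
    using h a by auto
  have "dominates (mset (map2 (+) xs a)) B'"
    unfolding dominates_def a(5)
    apply (rule exI[of _ "map2 (+) xs a"], rule exI[of _ "map2 (+) ys a"])
    using h a pw by simp
  then show ?thesis using mem unfolding weakly_monopolizes_def by blast
next
  case False
  then have "monopolizes A B" using wm unfolding weakly_monopolizes_def by blast
  then obtain u v c R where h: "A = mset ((u+1)#v#R)" "B = mset (u#(v+c)#R)" "0 \<le> c" "c \<le> 1"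
     "v + c < u + 1" using mono_elim by blast
  obtain a where a: "p \<in> P" "length a = length (u#(v+c)#R)" "\<forall>x\<in>set a. 0 \<le> x \<and> x \<le> 1" "sum_list a = real p"
     "B' = mset (map2 (+) (u#(v+c)#R) a)" using filler_reenum[OF fm h(2)[symmetric]] by blast
  obtain b0 b1 bR where ab: "a = b0 # b1 # bR" using a(2)
    by (metis Suc_length_conv length_Cons)
  have lbR: "length bR = length R" using a(2) ab by simp
  define RR where "RR = map2 (+) R bR"
  have bb: "0 \<le> b0" "b0 \<le> 1" "0 \<le> b1" "b1 \<le> 1" "\<forall>x\<in>set bR. 0 \<le> x \<and> x \<le> 1"
    using a(3) ab by auto
  have B': "B' = mset ((u+b0) # (v+c+b1) # RR)" using a(5) ab RR_def by simp
  show ?thesis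
  proof (cases "v + c + b1 < u + 1 + b0")
    case True
    have mem: "(p, mset (map2 (+) ((u+1)#v#R) a)) \<in> filler_moves P A"
      using filler_intro[of p P a "(u+1)#v#R"] a h by simp
    have A': "mset (map2 (+) ((u+1)#v#R) a) = mset (((u+b0)+1) # (v+b1) # RR)"
      using ab RR_def by (simp add: algebra_simps)
    have "monopolizes (mset (((u+b0)+1) # (v+b1) # RR)) (mset ((u+b0) # ((v+b1)+c) # RR))"
      using h True by (intro mono_intro) auto
    moreover have "mset ((u+b0) # ((v+b1)+c) # RR) = B'" using B' by (simp add: algebra_simps)
    ultimately show ?thesis using mem A' unfolding weakly_monopolizes_def by auto
  next
    case False
    define a1 where "a1 = max (b0+b1-1) (max 0 (b0+u-v))"
    define a0 where "a0 = b0 + b1 - a1"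
    have c1: "0 \<le> a1" "a1 \<le> 1" "0 \<le> a0" "a0 \<le> 1" "v + c + b1 \<le> u + 1 + a0" "u + b0 \<le> v + a1"
      using bb h(3,4,5) False unfolding a0_def a1_def by (auto simp: max_def)
    define a' where "a' = a0 # a1 # bR"
    have sa: "sum_list a' = real p" using a(4) ab unfolding a'_def a0_def by simp
    have mem: "(p, mset (map2 (+) ((u+1)#v#R) a')) \<in> filler_moves P A"
      using filler_intro[of p P a' "(u+1)#v#R"] a(1) h(1) c1 bb sa lbR unfolding a'_def by auto
    have A': "mset (map2 (+) ((u+1)#v#R) a') = mset ((u+1+a0) # (v+a1) # RR)"
      using RR_def unfolding a'_def by simp
    have dom: "dominates (mset ((u+1+a0) # (v+a1) # RR)) (mset ((v+c+b1) # (u+b0) # RR))"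
      using c1 by (intro dom_cons2) auto
    have eq: "mset ((v+c+b1) # (u+b0) # RR) = B'" using B' by (simp add: add_mset_commute)
    show ?thesis using mem A' dom eq unfolding weakly_monopolizes_def by auto
  qed
qed

lemma backlog_ge: "x \<in># S \<Longrightarrow> x \<le> backlog S"
  unfolding backlog_def by simp

lemma backlog_in: "S \<noteq> {#} \<Longrightarrow> backlog S \<in># S"
  unfolding backlog_def by (intro Max_in) auto

lemma backlog_le: "S \<noteq> {#} \<Longrightarrow> \<forall>x\<in>#S. x \<le> M \<Longrightarrow> backlog S \<le> M"
  using backlog_in by blast

lemma filler_backlog:
  assumes fm: "(p,S') \<in> filler_moves P S" and ne: "S \<noteq> {#}"
  shows "backlog S \<le> backlog S' \<and> backlog S' \<le> backlog S + 1"
proof -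
  obtain xs where xs: "mset xs = S" using ex_mset by blast
  obtain a where a: "length a = length xs" "\<forall>x\<in>set a. 0 \<le> x \<and> x \<le> 1"
     "S' = mset (map2 (+) xs a)" using filler_reenum[OF fm xs] by blast
  have ne': "S' \<noteq> {#}" using a ne xs by auto
  have up: "\<forall>y\<in>#S'. y \<le> backlog S + 1"
  proof
    fix y assume "y \<in># S'"
    then obtain i where i: "i < length xs" "y = xs ! i + a ! i" using a(1) a(3)
      by (auto simp: in_set_conv_nth)
    have "xs ! i \<le> backlog S" using xs i(1) backlog_ge by (metis nth_mem set_mset_mset)
    moreover have "a ! i \<le> 1" using a(1,2) i(1) by auto
    ultimately show "y \<le> backlog S + 1" using i by simp
  qed
  obtain k where k: "k < length xs" "xs ! k = backlog S" using backlog_in[OF ne] xs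
    by (metis in_set_conv_nth set_mset_mset)
  have "(map2 (+) xs a) ! k = xs ! k + a ! k" "k < length (map2 (+) xs a)" using a(1) k(1) by simp_all
  then have "xs ! k + a ! k \<in># S'" using a(3) by (metis nth_mem set_mset_mset)
  then have "xs ! k + a ! k \<le> backlog S'" by (rule backlog_ge)
  moreover have "0 \<le> a ! k" using a(1,2) k(1) by auto
  ultimately show ?thesis using backlog_le[OF ne' up] k by simp
qed

lemma emptier_backlog:
  assumes em: "S'' \<in> emptier_moves nn p S" and ne: "S \<noteq> {#}"
  shows "backlog S - 1 \<le> backlog S'' \<and> backlog S'' \<le> max (backlog S) 0"
proof -
  obtain ys J where h: "mset ys = S" "J \<subseteq> {..<length ys}"
     "S'' = mset (map (\<lambda>i. if i \<in> J then dec nn (ys ! i) else ys ! i) [0..<length ys])"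
    using em unfolding emptier_moves_def by blast
  have "size S'' = size S" by (rule emptier_size[OF em])
  then have ne': "S'' \<noteq> {#}" using ne by auto
  have up: "\<forall>y\<in>#S''. y \<le> max (backlog S) 0"
  proof
    fix y assume "y \<in># S''"
    then obtain i where i: "i < length ys" "y = (if i \<in> J then dec nn (ys ! i) else ys ! i)" using h(3)
      by auto
    have "ys ! i \<le> backlog S" using h(1) i(1) backlog_ge by (metis nth_mem set_mset_mset)
    then show "y \<le> max (backlog S) 0" using i dec_bounds(2)[of nn "ys ! i"] by auto
  qed
  obtain k where k: "k < length ys" "ys ! k = backlog S" using backlog_in[OF ne] h(1)
    by (metis in_set_conv_nth set_mset_mset)
  have "(if k \<in> J then dec nn (ys ! k) else ys ! k) \<in># S''" using h(3) k(1) by auto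
  then have "(if k \<in> J then dec nn (ys ! k) else ys ! k) \<le> backlog S''" by (rule backlog_ge)
  moreover have "ys ! k - 1 \<le> (if k \<in> J then dec nn (ys ! k) else ys ! k)"
    using dec_bounds(1)[of "ys ! k" nn] by auto
  ultimately show ?thesis using backlog_le[OF ne' up] k by simp
qed

lemma greedy_in_emptier: "p \<le> size S \<Longrightarrow> greedy_empty nn p S \<in> emptier_moves nn p S"
proof -
  assume p: "p \<le> size S"
  obtain xs where xs: "mset xs = S" using ex_mset by blast
  obtain g where g: "length g = length xs" "length (filter id g) = p"
     "greedy_empty nn p S = mset (map2 (F nn) xs g)"
    using greedy_char[OF p xs, of nn] by blast
  show ?thesis using emptier_intro[OF xs g(1,2)] g(3) by simp
qed

lemma filler_nonempty:
  assumes "p \<in> P" "p \<le> size S"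
  shows "filler_moves P S \<noteq> {}"
proof -
  obtain xs where xs: "mset xs = S" using ex_mset by blast
  define a :: "real list" where "a = replicate p 1 @ replicate (length xs - p) 0"
  have "length a = length xs" using assms(2) xs unfolding a_def by auto
  moreover have "\<forall>x\<in>set a. 0 \<le> x \<and> x \<le> 1" unfolding a_def by auto
  moreover have "sum_list a = real p" unfolding a_def by (simp add: sum_list_replicate)
  ultimately have "(p, mset (map2 (+) xs a)) \<in> filler_moves P S" using filler_intro[OF assms(1)] xs by blast
  then show ?thesis by blast
qed

lemma emptier_nonempty:
  assumes "p \<le> size S"
  shows "emptier_moves nn p S \<noteq> {}"
  using greedy_in_emptier[OF assms] by blast

lemma opt_bounds:
  "\<forall>S. 1 \<le> size S \<longrightarrow> (\<exists>p\<in>P. p \<le> size S) \<longrightarrow>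
     backlog S - real t \<le> OPT P nn S t \<and> OPT P nn S t \<le> max (backlog S) 0 + real t"
proof (induction t)
  case 0
  then show ?case by simp
next
  case (Suc t)
  show ?case
  proof (intro allI impI)
    fix S :: "real multiset" assume s1: "1 \<le> size S" and sp: "\<exists>p\<in>P. p \<le> size S"
    have neS: "S \<noteq> {#}" using s1 by auto
    define f where "f m = (INF S''\<in>emptier_moves nn (fst m) (snd m). OPT P nn S'' t)" for m
    have fb: "backlog S - 1 - real t \<le> f m \<and> f m \<le> max (backlog S) 0 + 1 + real t"
      if m: "m \<in> filler_moves P S" for m
    proof -
      obtain p S' where mm: "m = (p, S')" by (cases m)
      have fm: "(p,S') \<in> filler_moves P S" using m mm by simp
      have sz: "size S' = size S" "p \<le> size S" using filler_size[OF fm] by auto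
      have neS': "S' \<noteq> {#}" using sz neS by auto
      have bS': "backlog S \<le> backlog S' \<and> backlog S' \<le> backlog S + 1" using filler_backlog[OF fm neS] .
      have E: "emptier_moves nn p S' \<noteq> {}" using emptier_nonempty sz by auto
      have Eb: "backlog S' - 1 - real t \<le> OPT P nn S'' t \<and> OPT P nn S'' t \<le> max (backlog S) 0 + 1 + real t"
        if e: "S'' \<in> emptier_moves nn p S'" for S''
      proof -
        have "size S'' = size S" using emptier_size[OF e] sz by simp
        then have "backlog S'' - real t \<le> OPT P nn S'' t \<and> OPT P nn S'' t \<le> max (backlog S'') 0 + real t"
          using Suc.IH s1 sp by auto
        moreover have "backlog S' - 1 \<le> backlog S'' \<and> backlog S'' \<le> max (backlog S') 0"
          using emptier_backlog[OF e neS'] .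
        ultimately show ?thesis using bS' by auto
      qed
      have bdd: "bdd_below ((\<lambda>S''. OPT P nn S'' t) ` emptier_moves nn p S')"
        using Eb by (intro bdd_belowI2) blast
      have "f m \<ge> backlog S' - 1 - real t" unfolding f_def mm fst_conv snd_conv
        using E Eb by (intro cINF_greatest) auto
      moreover obtain S0 where S0: "S0 \<in> emptier_moves nn p S'" using E by blast
      have "f m \<le> OPT P nn S0 t" unfolding f_def mm fst_conv snd_conv
        by (rule cINF_lower[OF bdd S0])
      ultimately show ?thesis using Eb[OF S0] bS' by auto
    qed
    obtain p0 where p0: "p0 \<in> P" "p0 \<le> size S" using sp by blast
    have FM: "filler_moves P S \<noteq> {}" using filler_nonempty[OF p0] .
    have bdd: "bdd_above (f ` filler_moves P S)" using fb by (intro bdd_aboveI2) blast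
    have OS: "OPT P nn S (Suc t) = (SUP m\<in>filler_moves P S. f m)" unfolding f_def by simp
    have "OPT P nn S (Suc t) \<le> max (backlog S) 0 + 1 + real t"
      unfolding OS using FM fb by (intro cSUP_least) auto
    moreover obtain m0 where m0: "m0 \<in> filler_moves P S" using FM by blast
    have "f m0 \<le> OPT P nn S (Suc t)" unfolding OS by (rule cSUP_upper[OF m0 bdd])
    ultimately show "backlog S - real (Suc t) \<le> OPT P nn S (Suc t) \<and>
         OPT P nn S (Suc t) \<le> max (backlog S) 0 + real (Suc t)" using fb[OF m0] by auto
  qed
qed

lemma greedy_bound:
  "\<forall>S. 1 \<le> size S \<longrightarrow> (\<exists>p\<in>P. p \<le> size S) \<longrightarrow> GREEDY P nn S t \<le> max (backlog S) 0 + real t"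
proof (induction t)
  case 0
  then show ?case by simp
next
  case (Suc t)
  show ?case
  proof (intro allI impI)
    fix S :: "real multiset" assume s1: "1 \<le> size S" and sp: "\<exists>p\<in>P. p \<le> size S"
    have neS: "S \<noteq> {#}" using s1 by auto
    have fb: "GREEDY P nn (greedy_empty nn (fst m) (snd m)) t \<le> max (backlog S) 0 + 1 + real t"
      if m: "m \<in> filler_moves P S" for m
    proof -
      obtain p S' where mm: "m = (p, S')" by (cases m)
      have fm: "(p,S') \<in> filler_moves P S" using m mm by simp
      have sz: "size S' = size S" "p \<le> size S" using filler_size[OF fm] by auto
      have neS': "S' \<noteq> {#}" using sz neS by auto
      have bS': "backlog S \<le> backlog S' \<and> backlog S' \<le> backlog S + 1" using filler_backlog[OF fm neS] .
      have e: "greedy_empty nn p S' \<in> emptier_moves nn p S'" using greedy_in_emptier sz by auto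
      have "size (greedy_empty nn p S') = size S" using greedy_size sz by simp
      then have "GREEDY P nn (greedy_empty nn p S') t \<le> max (backlog (greedy_empty nn p S')) 0 + real t"
        using Suc.IH s1 sp by auto
      moreover have "backlog (greedy_empty nn p S') \<le> max (backlog S') 0"
        using emptier_backlog[OF e neS'] by simp
      ultimately show ?thesis using bS' mm by auto
    qed
    obtain p0 where p0: "p0 \<in> P" "p0 \<le> size S" using sp by blast
    have FM: "filler_moves P S \<noteq> {}" using filler_nonempty[OF p0] .
    have "GREEDY P nn S (Suc t) \<le> max (backlog S) 0 + 1 + real t"
      unfolding GREEDY.simps using FM fb by (intro cSUP_least) auto
    then show "GREEDY P nn S (Suc t) \<le> max (backlog S) 0 + real (Suc t)" by simp
  qed
qed

lemma wm_size: "weakly_monopolizes A B \<Longrightarrow> size B = size A"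
proof -
  assume wm: "weakly_monopolizes A B"
  show ?thesis
  proof (cases "dominates A B")
    case True then show ?thesis unfolding dominates_def by (metis size_mset)
  next
    case False
    then have "monopolizes A B" using wm unfolding weakly_monopolizes_def by blast
    then show ?thesis using mono_elim by fastforce
  qed
qed

lemma wm_backlog:
  assumes wm: "weakly_monopolizes A B" and ne: "A \<noteq> {#}"
  shows "backlog B \<le> backlog A"
proof -
  have neB: "B \<noteq> {#}" using wm_size[OF wm] ne by auto
  have "\<forall>y\<in>#B. y \<le> backlog A"
  proof (cases "dominates A B")
    case True
    then obtain xs ys where h: "mset xs = A" "mset ys = B" "length xs = length ys"
       "\<forall>i<length xs. ys ! i \<le> xs ! i" unfolding dominates_def by blast
    show ?thesis
    proof
      fix y assume "y \<in># B"
      then obtain i where i: "i < length ys" "y = ys ! i" using h(2) by (metis in_set_conv_nth set_mset_mset)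
      have "xs ! i \<le> backlog A" using h(1,3) i(1) backlog_ge by (metis nth_mem set_mset_mset)
      then show "y \<le> backlog A" using h(3,4) i by force
    qed
  next
    case False
    then have "monopolizes A B" using wm unfolding weakly_monopolizes_def by blast
    then obtain u v c R where h: "A = mset ((u+1)#v#R)" "B = mset (u#(v+c)#R)" "0 \<le> c" "c \<le> 1"
       "v + c < u + 1" using mono_elim by blast
    have u1: "u + 1 \<le> backlog A" using h(1) backlog_ge by simp
    show ?thesis
    proof
      fix y assume "y \<in># B"
      then consider "y = u" | "y = v + c" | "y \<in> set R" using h(2) by auto
      then show "y \<le> backlog A"
      proof cases
        case 3 then have "y \<in># A" using h(1) by simp
        then show ?thesis by (rule backlog_ge)
      qed (use u1 h(5) in auto)
    qed
  qed
  then show ?thesis using backlog_le[OF neB] by blast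
qed

lemma main:
  "\<forall>A B. 1 \<le> size A \<longrightarrow> (\<exists>p\<in>P. p \<le> size A) \<longrightarrow> (nn \<longrightarrow> nng A \<and> nng B) \<longrightarrow>
     weakly_monopolizes A B \<longrightarrow> OPT P nn B t \<le> GREEDY P nn A t"
proof (induction t)
  case 0
  show ?case using wm_backlog by fastforce
next
  case (Suc t)
  show ?case
  proof (intro allI impI)
    fix A B :: "real multiset"
    assume s1: "1 \<le> size A" and sp: "\<exists>p\<in>P. p \<le> size A" and nnh: "nn \<longrightarrow> nng A \<and> nng B"
      and wm: "weakly_monopolizes A B"
    have szB: "size B = size A" using wm_size[OF wm] .
    have neA: "A \<noteq> {#}" using s1 by auto
    define f where "f m = (INF S''\<in>emptier_moves nn (fst m) (snd m). OPT P nn S'' t)" for m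
    obtain p0 where p0: "p0 \<in> P" "p0 \<le> size B" using sp szB by auto
    have FM: "filler_moves P B \<noteq> {}" using filler_nonempty[OF p0] .
    have gbdd: "bdd_above ((\<lambda>m. GREEDY P nn (greedy_empty nn (fst m) (snd m)) t) ` filler_moves P A)"
    proof (rule bdd_aboveI2)
      fix m assume m: "m \<in> filler_moves P A"
      obtain p A' where mm: "m = (p, A')" by (cases m)
      have fm: "(p,A') \<in> filler_moves P A" using m mm by simp
      have sz: "size A' = size A" "p \<le> size A" using filler_size[OF fm] by auto
      have "GREEDY P nn (greedy_empty nn p A') t \<le> max (backlog (greedy_empty nn p A')) 0 + real t"
        using greedy_bound[of P nn t] s1 sp sz greedy_size by metis
      moreover have neA': "A' \<noteq> {#}" using sz s1 by auto
      moreover have "backlog (greedy_empty nn p A') \<le> max (backlog A') 0"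
        using emptier_backlog[OF greedy_in_emptier[of p A' nn] neA'] sz by auto
      moreover have "backlog A' \<le> backlog A + 1" using filler_backlog[OF fm neA] by auto
      ultimately show "GREEDY P nn (greedy_empty nn (fst m) (snd m)) t \<le> max (backlog A) 0 + 1 + real t"
        using mm by auto
    qed
    have "f m \<le> GREEDY P nn A (Suc t)" if m: "m \<in> filler_moves P B" for m
    proof -
      obtain p B' where mm: "m = (p, B')" by (cases m)
      have fm: "(p,B') \<in> filler_moves P B" using m mm by simp
      have szB': "size B' = size A" "p \<le> size A" using filler_size[OF fm] szB by auto
      have neB': "B' \<noteq> {#}" using szB' s1 by auto
      obtain A' where A': "(p,A') \<in> filler_moves P A" "weakly_monopolizes A' B'"
        using filler_step[OF wm fm] by blast
      have szA': "size A' = size A" using filler_size[OF A'(1)] by simp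
      have nn': "nn \<longrightarrow> nng A' \<and> nng B'" using nnh filler_nng A'(1) fm by blast
      obtain B'' where B'': "B'' \<in> emptier_moves nn p B'" "weakly_monopolizes (greedy_empty nn p A') B''"
        using emptier_step[OF A'(2) _ nn'] szA' szB' by auto
      have szB'': "size B'' = size A" using emptier_size[OF B''(1)] szB' by simp
      have bdd: "bdd_below ((\<lambda>S''. OPT P nn S'' t) ` emptier_moves nn p B')"
      proof (rule bdd_belowI2)
        fix S'' assume e: "S'' \<in> emptier_moves nn p B'"
        have "size S'' = size A" using emptier_size[OF e] szB' by simp
        then have "backlog S'' - real t \<le> OPT P nn S'' t" using opt_bounds[of P t nn] s1 sp by auto
        moreover have "backlog B' - 1 \<le> backlog S''" using emptier_backlog[OF e neB'] by auto
        ultimately show "backlog B' - 1 - real t \<le> OPT P nn S'' t" by simp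
      qed
      have "f m \<le> OPT P nn B'' t" unfolding f_def mm fst_conv snd_conv by (rule cINF_lower[OF bdd B''(1)])
      also have "\<dots> \<le> GREEDY P nn (greedy_empty nn p A') t"
      proof -
        have "nn \<longrightarrow> nng (greedy_empty nn p A') \<and> nng B''"
          using nn' greedy_nng emptier_nng[OF B''(1)] by blast
        moreover have "size (greedy_empty nn p A') = size A" using greedy_size szA' by simp
        ultimately show ?thesis using Suc.IH s1 sp B''(2) by auto
      qed
      also have "\<dots> \<le> GREEDY P nn A (Suc t)"
        unfolding GREEDY.simps using cSUP_upper[OF A'(1) gbdd] by simp
      finally show ?thesis .
    qed
    then show "OPT P nn B (Suc t) \<le> GREEDY P nn A (Suc t)"
      unfolding OPT.simps f_def[symmetric] using FM by (intro cSUP_least) auto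
  qed
qed

theorem lemma4p3:
  fixes A B :: "real multiset" and P :: "nat set" and nn :: bool and t :: nat
  assumes game: "(\<exists>p. 1 \<le> p \<and> p \<le> size A \<and> P = {p}) \<or> P = {1..size A}"
    and ncups: "1 \<le> size A"
    and nonneg: "nn \<longrightarrow> (\<forall>x\<in>#A. 0 \<le> x) \<and> (\<forall>x\<in>#B. 0 \<le> x)"
    and wm: "weakly_monopolizes A B"
  shows "GREEDY P nn A t \<ge> OPT P nn B t"
proof -
  have sp: "\<exists>p\<in>P. p \<le> size A" using game ncups by auto
  have "nn \<longrightarrow> nng A \<and> nng B" using nonneg unfolding nng_def by blast
  then show ?thesis using main[of P nn t] ncups sp wm by blast
qed

end
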